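(* For a multi-parameter family $\rho(\theta)=\sum_{k=1}^d p_k(\theta)|w_k(\theta)\rangle\langle w_k(\theta)|$ with a chosen smooth spectral decomposition as in the context, at every $\theta$ one has the matrix inequality $$H_{SLD}(\theta)\le C_L(\theta),$$ i.e. $v^TH_{SLD}(\theta)v\le v^TC_L(\theta)v$ for all $v\in\mathbb{R}^p$.
   Context: Let $\Theta\subseteq\mathbb{R}^p$ be open and $\rho(\theta)=\sum_{k=1}^d p_k(\theta)|w_k(\theta)\rangle\langle w_k(\theta)|$, where $p_k:\Theta\to[0,1]$ are smooth with $\sum_k p_k=1$ and $|w_1(\theta)\rangle,\dots,|w_d(\theta)\rangle$ is an orthonormal basis of $\mathbb{C}^d$ depending smoothly on $\theta$. Write $|w_k^{(l)}\rangle=\frac{\partial}{\partial\theta^l}|w_k(\theta)\rangle$. Convention: indices $i$ with $p_i(\theta)=0$ are omitted from sums containing $1/p_i$. The $C_L$ quantum information is the $p\times p$ matrix $$C_L(\theta)_{kl}=\sum_i\frac{1}{p_i}\frac{\partial p_i}{\partial\theta^k}\frac{\partial p_i}{\partial\theta^l}+4\,\Re\sum_{i<j}(p_i+p_j)\langle w_i^{(k)}|w_j\rangle\langle w_j|w_i^{(l)}\rangle.$$ The SLD quantum information matrix is $H_{SLD}(\theta)_{kl}=\Re\,\mathrm{tr}\{\rho(\theta)\lambda_k(\theta)\lambda_l(\theta)\}$, where $\lambda_k(\theta)$ is any Hermitian solution of $\frac{\partial\rho}{\partial\theta^k}=\frac12(\rho\lambda_k+\lambda_k\rho)$. For symmetric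 matrices, $A\le B$ means $B-A$ is positive semidefinite. *)

theory Defs
  imports "HOL-Analysis.Analysis"
begin

definition cinner :: "complex^'d \<Rightarrow> complex^'d \<Rightarrow> complex" where
  "cinner a b = (\<Sum>i\<in>UNIV. cnj (a $ i) * b $ i)"

definition partial :: "'p \<Rightarrow> (real^'p \<Rightarrow> 'b::real_normed_vector) \<Rightarrow> real^'p \<Rightarrow> 'b" where
  "partial l f \<theta> = vector_derivative (\<lambda>t. f (\<theta> + t *\<^sub>R axis l 1)) (at 0)"

fun iter_partial :: "'p list \<Rightarrow> (real^'p \<Rightarrow> 'b::real_normed_vector) \<Rightarrow> real^'p \<Rightarrow> 'b" where
  "iter_partial [] f = f"
| "iter_partial (l # ls) f = partial l (iter_partial ls f)"

definition smooth_on :: "(real^'p) set \<Rightarrow> (real^'p \<Rightarrow> 'b::real_normed_vector) \<Rightarrow> bool" where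
  "smooth_on S f \<longleftrightarrow> (\<forall>ls. continuous_on S (iter_partial ls f) \<and>
     (\<forall>l. \<forall>\<theta>\<in>S. (\<lambda>t. iter_partial ls f (\<theta> + t *\<^sub>R axis l 1)) differentiable (at 0)))"

definition hermitian :: "complex^'d^'d \<Rightarrow> bool" where
  "hermitian A \<longleftrightarrow> (\<forall>i j. A $ i $ j = cnj (A $ j $ i))"

definition ctrace :: "complex^'d^'d \<Rightarrow> complex" where
  "ctrace A = (\<Sum>i\<in>UNIV. A $ i $ i)"

definition rho :: "('d \<Rightarrow> real^'p \<Rightarrow> real) \<Rightarrow> ('d \<Rightarrow> real^'p \<Rightarrow> complex^'d)
                   \<Rightarrow> real^'p \<Rightarrow> complex^'d^'d" where
  "rho p w \<theta> = (\<chi> i j. \<Sum>k\<in>UNIV. complex_of_real (p k \<theta>) * (w k \<theta>) $ i * cnj ((w k \<theta>) $ j))"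

definition H_SLD :: "('d \<Rightarrow> real^'p \<Rightarrow> real) \<Rightarrow> ('d \<Rightarrow> real^'p \<Rightarrow> complex^'d)
                   \<Rightarrow> ('p \<Rightarrow> complex^'d^'d) \<Rightarrow> real^'p \<Rightarrow> real^'p^'p" where
  "H_SLD p w lam \<theta> = (\<chi> k l. Re (ctrace (rho p w \<theta> ** lam k ** lam l)))"

definition C_L :: "('d::{finite,linorder} \<Rightarrow> real^'p \<Rightarrow> real) \<Rightarrow> ('d::{finite,linorder} \<Rightarrow> real^'p \<Rightarrow> complex^'d::{finite,linorder})
                   \<Rightarrow> real^'p \<Rightarrow> real^'p^'p" where
  "C_L p w \<theta> = (\<chi> k l.
      (\<Sum>i\<in>{i. p i \<theta> \<noteq> 0}. (1 / p i \<theta>) * partial k (p i) \<theta> * partial l (p i) \<theta>)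
    + 4 * Re (\<Sum>(i,j)\<in>{(i,j). i < j}.
         complex_of_real (p i \<theta> + p j \<theta>) * cinner (partial k (w i) \<theta>) (w j \<theta>)
           * cinner (w j \<theta>) (partial l (w i) \<theta>)))"

end

theory Submission
  imports Defs
begin



lemma bounded_linear_axis: "bounded_linear (axis i :: 'a::real_normed_vector \<Rightarrow> 'a^'n)"
proof (rule bounded_linear_intro[where K=1])
  fix x y :: 'a and r :: real
  show "axis i (x + y) = (axis i x + axis i y :: 'a^'n)" by (simp add: vec_eq_iff axis_def)
  show "axis i (r *\<^sub>R x) = (r *\<^sub>R axis i x :: 'a^'n)" by (simp add: vec_eq_iff axis_def)
  have "norm (axis i x :: 'a^'n) \<le> (\<Sum>j\<in>UNIV. norm ((axis i x :: 'a^'n) $ j))"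
    unfolding norm_vec_def by (rule L2_set_le_sum) simp
  also have "\<dots> = norm x" by (simp add: axis_def if_distrib cong: if_cong)
  finally show "norm (axis i x :: 'a^'n) \<le> norm x * 1" by simp
qed

lemma vec_hvd:
  fixes f :: "real \<Rightarrow> 'a::real_normed_vector^'n"
  assumes "\<And>i. ((\<lambda>t. f t $ i) has_vector_derivative f' $ i) F"
  shows "(f has_vector_derivative f') F"
proof -
  have e: "\<And>x::'a^'n. x = (\<Sum>i\<in>UNIV. axis i (x $ i))"
    by (simp add: vec_eq_iff sum_component axis_def)
  have "((\<lambda>t. \<Sum>i\<in>UNIV. axis i (f t $ i)) has_vector_derivative (\<Sum>i\<in>UNIV. axis i (f' $ i))) F"
    by (intro has_vector_derivative_sum bounded_linear.has_vector_derivative[OF bounded_linear_axis] assms)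
  then show ?thesis using e[symmetric] by simp
qed

definition cdot :: "complex^'d \<Rightarrow> complex^'d \<Rightarrow> complex" where "cdot = cinner"

lemma cinner_hvd:
  assumes "(f has_vector_derivative f') (at x)" "(g has_vector_derivative g') (at x)"
  shows "((\<lambda>t. cinner (f t) (g t)) has_vector_derivative (cinner (f x) g' + cinner f' (g x))) (at x)"
proof -
  have "((\<lambda>t. \<Sum>i\<in>UNIV. cnj (f t $ i) * g t $ i) has_vector_derivative
     (\<Sum>i\<in>UNIV. cnj (f x $ i) * g' $ i + cnj (f' $ i) * g x $ i)) (at x)"
    apply (intro has_vector_derivative_sum has_vector_derivative_mult
       bounded_linear.has_vector_derivative[OF bounded_linear_cnj]
       bounded_linear.has_vector_derivative[OF bounded_linear_vec_nth])
    using assms by auto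
  then show ?thesis by (simp add: cinner_def sum.distrib)
qed



definition rr :: "('d::finite \<Rightarrow> real) \<Rightarrow> ('d \<Rightarrow> complex^'d) \<Rightarrow> complex^'d^'d" where
  "rr q W = (\<chi> i j. \<Sum>k\<in>UNIV. complex_of_real (q k) * W k $ i * cnj (W k $ j))"

lemma cinner_swap: "cinner b a = cnj (cinner a b)"
  by (simp add: cinner_def mult.commute)

lemma cinner_scale_r: "cinner u (c *s z) = c * cinner u z"
  by (simp add: cinner_def sum_distrib_left algebra_simps)

lemma cinner_herm:
  assumes "hermitian A"
  shows "cinner u (A *v z) = cinner (A *v u) z"
proof -
  have "cinner u (A *v z) = (\<Sum>a\<in>UNIV. \<Sum>b\<in>UNIV. cnj (u $ a) * A $ a $ b * z $ b)"
    by (simp add: cinner_def matrix_vector_mult_def sum_distrib_left mult.assoc)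
  also have "\<dots> = (\<Sum>b\<in>UNIV. \<Sum>a\<in>UNIV. cnj (u $ a) * A $ a $ b * z $ b)"
    by (rule sum.swap)
  also have "\<dots> = (\<Sum>b\<in>UNIV. \<Sum>a\<in>UNIV. cnj (A $ b $ a * u $ a) * z $ b)"
    using assms unfolding hermitian_def by (intro sum.cong refl) (metis complex_cnj_cnj complex_cnj_mult mult.commute)
  also have "\<dots> = cinner (A *v u) z"
    by (simp add: cinner_def matrix_vector_mult_def sum_distrib_right)
  finally show ?thesis .
qed

lemma rr_herm: "hermitian (rr q W)"
  unfolding hermitian_def rr_def by (simp add: mult.commute mult.left_commute)

lemma rr_col:
  assumes ON: "\<And>i j. cinner (W i) (W j) = (if i = j then 1 else 0)"
  shows "rr q W *v W j = of_real (q j) *s W j"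
proof -
  { fix a
    have "(rr q W *v W j) $ a = (\<Sum>c\<in>UNIV. \<Sum>k\<in>UNIV. of_real (q k) * W k $ a * (cnj (W k $ c) * W j $ c))"
      by (simp add: rr_def matrix_vector_mult_def sum_distrib_right mult.assoc)
    also have "\<dots> = (\<Sum>k\<in>UNIV. \<Sum>c\<in>UNIV. of_real (q k) * W k $ a * (cnj (W k $ c) * W j $ c))"
      by (rule sum.swap)
    also have "\<dots> = (\<Sum>k\<in>UNIV. of_real (q k) * W k $ a * cinner (W k) (W j))"
      by (simp add: cinner_def sum_distrib_left)
    also have "\<dots> = of_real (q j) * W j $ a" by (simp add: ON if_distrib cong: if_cong)
    finally have "(rr q W *v W j) $ a = (of_real (q j) *s W j) $ a" by simp }
  then show ?thesis by (simp add: vec_eq_iff)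
qed

lemma complete:
  fixes W :: "'d::finite \<Rightarrow> complex^'d"
  assumes ON: "\<And>i j. cinner (W i) (W j) = (if i = j then 1 else 0)"
  shows "(\<Sum>j\<in>UNIV. W j $ c * cnj (W j $ d)) = (if c = d then 1 else 0)"
proof -
  define U :: "complex^'d^'d" where "U = (\<chi> a m. W m $ a)"
  define Uh :: "complex^'d^'d" where "Uh = (\<chi> m a. cnj (W m $ a))"
  have "Uh ** U = mat 1"
    using ON by (simp add: U_def Uh_def matrix_matrix_mult_def mat_def vec_eq_iff cinner_def)
  then have "U ** Uh = mat 1" using matrix_left_right_inverse by blast
  then have "(U ** Uh) $ c $ d = mat 1 $ c $ d" by simp
  then show ?thesis by (simp add: U_def Uh_def matrix_matrix_mult_def mat_def)
qed



lemma row_complete: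
  fixes W :: "'d::finite \<Rightarrow> complex^'d"
  assumes ON: "\<And>i j. cinner (W i) (W j) = (if i = j then 1 else 0)"
  shows "(\<Sum>j\<in>UNIV. (\<Sum>c\<in>UNIV. r c * W j $ c) * (\<Sum>d\<in>UNIV. cnj (W j $ d) * y d))
        = (\<Sum>c\<in>UNIV. r c * y c)"
proof -
  have "(\<Sum>j\<in>UNIV. (\<Sum>c\<in>UNIV. r c * W j $ c) * (\<Sum>d\<in>UNIV. cnj (W j $ d) * y d))
     = (\<Sum>j\<in>UNIV. \<Sum>c\<in>UNIV. \<Sum>d\<in>UNIV. r c * y d * (W j $ c * cnj (W j $ d)))"
    by (simp add: sum_product algebra_simps)
  also have "\<dots> = (\<Sum>c\<in>UNIV. \<Sum>j\<in>UNIV. \<Sum>d\<in>UNIV. r c * y d * (W j $ c * cnj (W j $ d)))"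
    by (rule sum.swap)
  also have "\<dots> = (\<Sum>c\<in>UNIV. \<Sum>d\<in>UNIV. \<Sum>j\<in>UNIV. r c * y d * (W j $ c * cnj (W j $ d)))"
    by (intro sum.cong refl sum.swap)
  also have "\<dots> = (\<Sum>c\<in>UNIV. \<Sum>d\<in>UNIV. r c * y d * (\<Sum>j\<in>UNIV. W j $ c * cnj (W j $ d)))"
    by (simp add: sum_distrib_left)
  also have "\<dots> = (\<Sum>c\<in>UNIV. r c * y c)"
    by (simp add: complete[OF ON] if_distrib cong: if_cong)
  finally show ?thesis .
qed

lemma cinner_mv: "cinner u (A *v y) = (\<Sum>c\<in>UNIV. (\<Sum>a\<in>UNIV. cnj (u $ a) * A $ a $ c) * y $ c)"
proof -
  have "cinner u (A *v y) = (\<Sum>a\<in>UNIV. \<Sum>c\<in>UNIV. cnj (u $ a) * A $ a $ c * y $ c)"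
    by (simp add: cinner_def matrix_vector_mult_def sum_distrib_left mult.assoc)
  also have "\<dots> = (\<Sum>c\<in>UNIV. \<Sum>a\<in>UNIV. cnj (u $ a) * A $ a $ c * y $ c)" by (rule sum.swap)
  finally show ?thesis by (simp add: sum_distrib_right)
qed

lemma insert_complete:
  fixes W :: "'d::finite \<Rightarrow> complex^'d"
  assumes ON: "\<And>i j. cinner (W i) (W j) = (if i = j then 1 else 0)"
  shows "cinner u (A *v y) = (\<Sum>j\<in>UNIV. cinner u (A *v W j) * cinner (W j) y)"
  unfolding cinner_mv[of u A] using row_complete[OF ON, of "\<lambda>c. \<Sum>a\<in>UNIV. cnj (u $ a) * A $ a $ c" "\<lambda>d. y $ d"]
  by (simp add: cinner_def)


lemma trace_rr:
  "ctrace (rr q W ** M) = (\<Sum>m\<in>UNIV. of_real (q m) * cinner (W m) (M *v W m))"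
proof -
  have "ctrace (rr q W ** M) = (\<Sum>a\<in>UNIV. \<Sum>c\<in>UNIV. (\<Sum>m\<in>UNIV. of_real (q m) * W m $ a * cnj (W m $ c)) * M $ c $ a)"
    by (simp add: ctrace_def rr_def matrix_matrix_mult_def)
  also have "\<dots> = (\<Sum>a\<in>UNIV. \<Sum>c\<in>UNIV. \<Sum>m\<in>UNIV. of_real (q m) * (cnj (W m $ c) * (M $ c $ a * W m $ a)))"
    by (simp add: sum_distrib_left sum_distrib_right mult.commute mult.left_commute)
  also have "\<dots> = (\<Sum>a\<in>UNIV. \<Sum>m\<in>UNIV. \<Sum>c\<in>UNIV. of_real (q m) * (cnj (W m $ c) * (M $ c $ a * W m $ a)))"
    by (intro sum.cong refl sum.swap)
  also have "\<dots> = (\<Sum>m\<in>UNIV. \<Sum>a\<in>UNIV. \<Sum>c\<in>UNIV. of_real (q m) * (cnj (W m $ c) * (M $ c $ a * W m $ a)))"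
    by (rule sum.swap)
  also have "\<dots> = (\<Sum>m\<in>UNIV. \<Sum>c\<in>UNIV. \<Sum>a\<in>UNIV. of_real (q m) * (cnj (W m $ c) * (M $ c $ a * W m $ a)))"
    by (intro sum.cong refl sum.swap)
  also have "\<dots> = (\<Sum>m\<in>UNIV. of_real (q m) * cinner (W m) (M *v W m))"
    by (simp add: cinner_def matrix_vector_mult_def sum_distrib_left)
  finally show ?thesis .
qed

lemma trace_rr2:
  fixes W :: "'d::finite \<Rightarrow> complex^'d"
  assumes ON: "\<And>i j. cinner (W i) (W j) = (if i = j then 1 else 0)"
  shows "ctrace (rr q W ** A ** B) = (\<Sum>i\<in>UNIV. \<Sum>j\<in>UNIV. of_real (q i) * (cinner (W i) (A *v W j) * cinner (W j) (B *v W i)))"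
proof -
  have "ctrace (rr q W ** A ** B) = ctrace (rr q W ** (A ** B))" by (simp add: matrix_mul_assoc)
  also have "\<dots> = (\<Sum>i\<in>UNIV. of_real (q i) * cinner (W i) (A *v (B *v W i)))"
    by (simp add: trace_rr matrix_vector_mul_assoc)
  also have "\<dots> = (\<Sum>i\<in>UNIV. \<Sum>j\<in>UNIV. of_real (q i) * (cinner (W i) (A *v W j) * cinner (W j) (B *v W i)))"
    by (intro sum.cong refl, subst insert_complete[OF ON, of _ A "B *v _"]) (simp add: sum_distrib_left)
  finally show ?thesis .
qed



lemma cinner_scale_l: "cinner (c *s u) z = cnj c * cinner u z"
  by (simp add: cinner_def sum_distrib_left algebra_simps)

lemma cinner_add_r: "cinner u (x + y) = cinner u x + cinner u y"
  by (simp add: cinner_def sum.distrib algebra_simps)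

lemma mv_add: "(X + Y) *v z = X *v z + Y *v (z::'a::comm_ring_1^'n)"
  by (simp add: vec_eq_iff matrix_vector_mult_def sum.distrib algebra_simps)

lemma mv_scaleR: "(r *\<^sub>R X) *v z = r *\<^sub>R (X *v (z::complex^'n))"
  by (simp add: vec_eq_iff matrix_vector_mult_def scaleR_sum_right)

lemma cinner_scaleR_r: "cinner u (r *\<^sub>R z) = of_real r * cinner u z"
  unfolding cinner_def vector_scaleR_component by (simp add: sum_distrib_left scaleR_conv_of_real algebra_simps)

lemma sld_entry:
  fixes W :: "'d::finite \<Rightarrow> complex^'d"
  assumes ON: "\<And>i j. cinner (W i) (W j) = (if i = j then 1 else 0)"
  shows "cinner (W i) (((1/2) *\<^sub>R (rr q W ** L + L ** rr q W)) *v W j)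
     = of_real ((q i + q j) / 2) * cinner (W i) (L *v W j)"
proof -
  have a: "cinner (W i) ((rr q W ** L) *v W j) = of_real (q i) * cinner (W i) (L *v W j)"
  proof -
    have "cinner (W i) ((rr q W ** L) *v W j) = cinner (W i) (rr q W *v (L *v W j))"
      by (simp add: matrix_vector_mul_assoc)
    also have "\<dots> = cinner (rr q W *v W i) (L *v W j)" by (rule cinner_herm[OF rr_herm])
    also have "\<dots> = of_real (q i) * cinner (W i) (L *v W j)" by (simp add: rr_col[OF ON] cinner_scale_l)
    finally show ?thesis .
  qed
  have b: "cinner (W i) ((L ** rr q W) *v W j) = of_real (q j) * cinner (W i) (L *v W j)"
  proof -
    have "cinner (W i) ((L ** rr q W) *v W j) = cinner (W i) (L *v (rr q W *v W j))"
      by (simp add: matrix_vector_mul_assoc)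
    also have "\<dots> = of_real (q j) * cinner (W i) (L *v W j)"
      by (simp add: rr_col[OF ON] cinner_scale_r vec.scale)
    finally show ?thesis .
  qed
  show ?thesis
    by (simp add: mv_add mv_scaleR cinner_scaleR_r cinner_add_r a b algebra_simps)
qed


lemma outer_sw:
  "cinner u ((\<chi> a b. \<Sum>m\<in>UNIV. c m * x m $ a * cnj (y m $ b)) *v z)
    = (\<Sum>m\<in>UNIV. c m * cinner u (x m) * cinner (y m) z)"
proof -
  have "cinner u ((\<chi> a b. \<Sum>m\<in>UNIV. c m * x m $ a * cnj (y m $ b)) *v z)
     = (\<Sum>a\<in>UNIV. \<Sum>b\<in>UNIV. \<Sum>m\<in>UNIV. c m * (cnj (u $ a) * x m $ a) * (cnj (y m $ b) * z $ b))"
    by (simp add: cinner_def matrix_vector_mult_def sum_distrib_left sum_distrib_right mult.commute mult.left_commute)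
  also have "\<dots> = (\<Sum>a\<in>UNIV. \<Sum>m\<in>UNIV. \<Sum>b\<in>UNIV. c m * (cnj (u $ a) * x m $ a) * (cnj (y m $ b) * z $ b))"
    by (intro sum.cong refl sum.swap)
  also have "\<dots> = (\<Sum>m\<in>UNIV. \<Sum>a\<in>UNIV. \<Sum>b\<in>UNIV. c m * (cnj (u $ a) * x m $ a) * (cnj (y m $ b) * z $ b))"
    by (rule sum.swap)
  also have "\<dots> = (\<Sum>m\<in>UNIV. c m * cinner u (x m) * cinner (y m) z)"
    by (simp add: cinner_def sum_distrib_left sum_distrib_right mult.assoc) (rule sum.cong[OF refl], rule sum.swap)
  finally show ?thesis .
qed

lemma rho_deriv:
  fixes P :: "'d::finite \<Rightarrow> real \<Rightarrow> real" and Wt :: "'d \<Rightarrow> real \<Rightarrow> complex^'d"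
  assumes hp: "\<And>m. (P m has_vector_derivative dp m) (at 0)"
    and hw: "\<And>m. (Wt m has_vector_derivative dw m) (at 0)"
  shows "((\<lambda>t. rr (\<lambda>m. P m t) (\<lambda>m. Wt m t)) has_vector_derivative
     ((\<chi> a b. \<Sum>m\<in>UNIV. of_real (dp m) * Wt m 0 $ a * cnj (Wt m 0 $ b))
    + (\<chi> a b. \<Sum>m\<in>UNIV. of_real (P m 0) * dw m $ a * cnj (Wt m 0 $ b))
    + (\<chi> a b. \<Sum>m\<in>UNIV. of_real (P m 0) * Wt m 0 $ a * cnj (dw m $ b)))) (at 0)"
proof (intro vec_hvd)
  fix a b
  have hp': "((\<lambda>t. complex_of_real (P m t)) has_vector_derivative of_real (dp m)) (at 0)" for m
    using hp[of m] by (intro has_vector_derivative_of_real) (simp add: has_real_derivative_iff_has_vector_derivative)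
  have hc: "((\<lambda>t. Wt m t $ c) has_vector_derivative dw m $ c) (at 0)" for m c
    by (rule bounded_linear.has_vector_derivative[OF bounded_linear_vec_nth hw])
  have hcc: "((\<lambda>t. cnj (Wt m t $ c)) has_vector_derivative cnj (dw m $ c)) (at 0)" for m c
    by (rule bounded_linear.has_vector_derivative[OF bounded_linear_cnj hc])
  have "((\<lambda>t. \<Sum>m\<in>UNIV. complex_of_real (P m t) * Wt m t $ a * cnj (Wt m t $ b)) has_vector_derivative
     (\<Sum>m\<in>UNIV. complex_of_real (P m 0) * Wt m 0 $ a * cnj (dw m $ b) +
        (complex_of_real (P m 0) * dw m $ a + of_real (dp m) * Wt m 0 $ a) * cnj (Wt m 0 $ b))) (at 0)"
    by (intro has_vector_derivative_sum has_vector_derivative_mult hp' hc hcc)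
  moreover have "(\<lambda>t. rr (\<lambda>m. P m t) (\<lambda>m. Wt m t) $ a $ b) = (\<lambda>t. \<Sum>m\<in>UNIV. complex_of_real (P m t) * Wt m t $ a * cnj (Wt m t $ b))"
    by (simp add: rr_def)
  moreover have "((\<chi> a b. \<Sum>m\<in>UNIV. of_real (dp m) * Wt m 0 $ a * cnj (Wt m 0 $ b))
    + (\<chi> a b. \<Sum>m\<in>UNIV. of_real (P m 0) * dw m $ a * cnj (Wt m 0 $ b))
    + (\<chi> a b. \<Sum>m\<in>UNIV. of_real (P m 0) * Wt m 0 $ a * cnj (dw m $ b))) $ a $ b
    = (\<Sum>m\<in>UNIV. complex_of_real (P m 0) * Wt m 0 $ a * cnj (dw m $ b) +
        (complex_of_real (P m 0) * dw m $ a + of_real (dp m) * Wt m 0 $ a) * cnj (Wt m 0 $ b))"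
    by (simp add: sum.distrib[symmetric] algebra_simps)
  ultimately show "((\<lambda>t. rr (\<lambda>m. P m t) (\<lambda>m. Wt m t) $ a $ b) has_vector_derivative
     ((\<chi> a b. \<Sum>m\<in>UNIV. of_real (dp m) * Wt m 0 $ a * cnj (Wt m 0 $ b))
    + (\<chi> a b. \<Sum>m\<in>UNIV. of_real (P m 0) * dw m $ a * cnj (Wt m 0 $ b))
    + (\<chi> a b. \<Sum>m\<in>UNIV. of_real (P m 0) * Wt m 0 $ a * cnj (dw m $ b))) $ a $ b) (at 0)"
    by simp
qed


lemma pair_sum:
  fixes h :: "'d::{finite,linorder} \<Rightarrow> 'd \<Rightarrow> real"
  shows "(\<Sum>(i,j)\<in>{(i,j). i < j}. h i j) = (\<Sum>i\<in>UNIV. \<Sum>j\<in>UNIV. if i < j then h i j else 0)"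
proof -
  have "(\<Sum>(i,j)\<in>{(i,j). i < j}. h i j) = (\<Sum>x\<in>UNIV. if x \<in> {(i,j). i < j} then (case x of (i,j) \<Rightarrow> h i j) else 0)"
    using sum.inter_restrict[of UNIV "\<lambda>(i,j). h i j" "{(i,j). i < j}"] by simp
  also have "\<dots> = (\<Sum>(i,j)\<in>UNIV \<times> UNIV. if i < j then h i j else 0)"
    by (intro sum.cong) auto
  also have "\<dots> = (\<Sum>i\<in>UNIV. \<Sum>j\<in>UNIV. if i < j then h i j else 0)"
    by (rule sum.cartesian_product[symmetric])
  finally show ?thesis .
qed

lemma offdiag_sum:
  fixes h :: "'d::{finite,linorder} \<Rightarrow> 'd \<Rightarrow> real"
  assumes sym: "\<And>i j. h i j = h j i"
  shows "(\<Sum>i\<in>UNIV. \<Sum>j\<in>UNIV. if i = j then 0 else h i j) = 2 * (\<Sum>(i,j)\<in>{(i,j). i < j}. h i j)"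
proof -
  have "(\<Sum>i\<in>UNIV. \<Sum>j\<in>UNIV. if i = j then 0 else h i j)
      = (\<Sum>i\<in>UNIV. \<Sum>j\<in>UNIV. if i < j then h i j else 0) + (\<Sum>i\<in>UNIV. \<Sum>j\<in>UNIV. if j < i then h i j else 0)"
    unfolding sum.distrib[symmetric] by (intro sum.cong refl) (auto simp: not_less_iff_gr_or_eq)
  also have "(\<Sum>i\<in>UNIV. \<Sum>j\<in>UNIV. if j < i then h i j else 0) = (\<Sum>j\<in>UNIV. \<Sum>i\<in>UNIV. if j < i then h i j else 0)"
    by (rule sum.swap)
  also have "\<dots> = (\<Sum>i\<in>UNIV. \<Sum>j\<in>UNIV. if i < j then h i j else 0)"
    using sym by (intro sum.cong refl) auto
  finally show ?thesis by (simp add: pair_sum)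
qed

lemma alg:
  fixes p :: "'d::{finite,linorder} \<Rightarrow> real" and L A :: "'d \<Rightarrow> 'd \<Rightarrow> complex" and Dp :: "'d \<Rightarrow> real"
  assumes pos: "\<And>i. p i \<ge> 0"
    and Lh: "\<And>i j. L j i = cnj (L i j)"
    and Ah: "\<And>i j. A i j = - cnj (A j i)"
    and rel: "\<And>i j. of_real ((p i + p j) / 2) * L i j = (if i = j then of_real (Dp i) else 0) + of_real (p j - p i) * A i j"
  shows "Re (\<Sum>i\<in>UNIV. \<Sum>j\<in>UNIV. of_real (p i) * (L i j * L j i))
     \<le> (\<Sum>i\<in>{i. p i \<noteq> 0}. Dp i ^ 2 / p i) + 4 * Re (\<Sum>(i,j)\<in>{(i,j). i < j}. of_real (p i + p j) * cnj (A j i) * A j i)"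
proof -
  define n where "n i j = (cmod (L i j))^2" for i j
  define g where "g i j = (if i = j then (if p i \<noteq> 0 then Dp i ^ 2 / p i else 0) else 2 * (p i + p j) * (cmod (A i j))^2)" for i j
  have nsym: "n i j = n j i" for i j by (simp add: n_def Lh[of i j])
  have S1: "Re (\<Sum>i\<in>UNIV. \<Sum>j\<in>UNIV. of_real (p i) * (L i j * L j i)) = (\<Sum>i\<in>UNIV. \<Sum>j\<in>UNIV. p i * n i j)"
  proof -
    have "L i j * L j i = of_real (n i j)" for i j
    proof -
      have "L j i = cnj (L i j)" by (rule Lh)
      then show ?thesis unfolding n_def using complex_norm_square[of "L i j"] by simp
    qed
    then have "of_real (p i) * (L i j * L j i) = complex_of_real (p i * n i j)" for i j
      by simp
    then have "(\<Sum>i\<in>UNIV. \<Sum>j\<in>UNIV. of_real (p i) * (L i j * L j i)) = (\<Sum>i\<in>UNIV. \<Sum>j\<in>UNIV. complex_of_real (p i * n i j))"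
      by (intro sum.cong refl)
    then show ?thesis by (simp only: Re_sum Re_complex_of_real)
  qed
  have S2: "(\<Sum>i\<in>UNIV. \<Sum>j\<in>UNIV. p i * n i j) = (\<Sum>i\<in>UNIV. \<Sum>j\<in>UNIV. (p i + p j) / 2 * n i j)"
  proof -
    have "(\<Sum>i\<in>UNIV. \<Sum>j\<in>UNIV. p j * n i j) = (\<Sum>j\<in>UNIV. \<Sum>i\<in>UNIV. p j * n i j)" by (rule sum.swap)
    also have "\<dots> = (\<Sum>i\<in>UNIV. \<Sum>j\<in>UNIV. p i * n i j)" using nsym by simp
    finally have "(\<Sum>i\<in>UNIV. \<Sum>j\<in>UNIV. p j * n i j) = (\<Sum>i\<in>UNIV. \<Sum>j\<in>UNIV. p i * n i j)" .
    then show ?thesis by (simp add: sum.distrib add_divide_distrib distrib_right sum_divide_distrib[symmetric])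
  qed
  have T: "(p i + p j) / 2 * n i j \<le> g i j" for i j
  proof (cases "i = j")
    case True
    have "of_real (p i) * L i i = of_real (Dp i)" using rel[of i i] True by simp
    then have e: "p i * cmod (L i i) = \<bar>Dp i\<bar>"
      by (metis abs_of_nonneg norm_mult norm_of_real pos)
    show ?thesis
    proof (cases "p i = 0")
      case True then show ?thesis using \<open>i = j\<close> by (simp add: g_def)
    next
      case False
      have "p i * n i i = (p i * cmod (L i i))^2 / p i" using False by (simp add: n_def power2_eq_square)
      also have "\<dots> = Dp i ^ 2 / p i" by (simp add: e)
      finally show ?thesis using \<open>i = j\<close> False by (simp add: g_def)
    qed
  next
    case False
    define s where "s = p i + p j"
    have s0: "s \<ge> 0" using pos[of i] pos[of j] by (simp add: s_def)
    have d: "\<bar>p j - p i\<bar> \<le> s" using pos[of i] pos[of j] by (simp add: s_def)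
    have "cmod (of_real (s / 2) * L i j) = cmod (of_real (p j - p i) * A i j)" using rel[of i j] False by (simp add: s_def)
    then have "\<bar>s / 2\<bar> * cmod (L i j) = \<bar>p j - p i\<bar> * cmod (A i j)" by (simp only: norm_mult norm_of_real)
    then have e: "s / 2 * cmod (L i j) = \<bar>p j - p i\<bar> * cmod (A i j)" using s0 by simp
    have "s / 2 * cmod (L i j) \<le> s * cmod (A i j)" unfolding e by (intro mult_right_mono d) simp
    then have "(s / 2 * cmod (L i j)) * cmod (L i j) \<le> (s * cmod (A i j)) * (2 * cmod (A i j))"
    proof (cases "s = 0")
      case True then show ?thesis by simp
    next
      case False
      with s0 have "s > 0" by simp
      from \<open>s / 2 * cmod (L i j) \<le> s * cmod (A i j)\<close> \<open>s > 0\<close> have l: "cmod (L i j) \<le> 2 * cmod (A i j)"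
        by (simp add: field_simps)
      show ?thesis using mult_mono[OF \<open>s / 2 * cmod (L i j) \<le> s * cmod (A i j)\<close> l] s0 by simp
    qed
    then show ?thesis using False by (simp add: g_def n_def s_def power2_eq_square algebra_simps)
  qed
  have R: "(\<Sum>i\<in>UNIV. \<Sum>j\<in>UNIV. g i j) = (\<Sum>i\<in>{i. p i \<noteq> 0}. Dp i ^ 2 / p i)
      + 4 * Re (\<Sum>(i,j)\<in>{(i,j). i < j}. of_real (p i + p j) * cnj (A j i) * A j i)"
  proof -
    have g_split: "g i j = (if i = j then (if p i \<noteq> 0 then Dp i ^ 2 / p i else 0) else 0)
       + (if i = j then 0 else 2 * ((p i + p j) * (cmod (A i j))^2))" for i j
      by (simp add: g_def)
    have "(\<Sum>i\<in>UNIV. \<Sum>j\<in>UNIV. if i = j then (if p i \<noteq> 0 then Dp i ^ 2 / p i else 0) else 0)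
        = (\<Sum>i\<in>{i. p i \<noteq> 0}. Dp i ^ 2 / p i)"
      by (simp add: sum.If_cases)
    moreover have "(\<Sum>i\<in>UNIV. \<Sum>j\<in>UNIV. if i = j then 0 else 2 * ((p i + p j) * (cmod (A i j))^2))
       = 2 * (2 * (\<Sum>(i,j)\<in>{(i,j). i < j}. (p i + p j) * (cmod (A i j))^2))"
    proof -
      have "cmod (A i j) = cmod (A j i)" for i j by (simp add: Ah[of i j])
      then have "(\<Sum>i\<in>UNIV. \<Sum>j\<in>UNIV. if i = j then 0 else 2 * ((p i + p j) * (cmod (A i j))^2))
         = 2 * (\<Sum>(i,j)\<in>{(i,j). i < j}. 2 * ((p i + p j) * (cmod (A i j))^2))"
        by (intro offdiag_sum) (simp add: algebra_simps)
      also have "\<dots> = 2 * (2 * (\<Sum>(i,j)\<in>{(i,j). i < j}. (p i + p j) * (cmod (A i j))^2))"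
        by (simp add: sum_distrib_left case_prod_beta)
      finally show ?thesis .
    qed
    moreover have "Re (\<Sum>(i,j)\<in>{(i,j). i < j}. of_real (p i + p j) * cnj (A j i) * A j i)
        = (\<Sum>(i,j)\<in>{(i,j). i < j}. (p i + p j) * (cmod (A i j))^2)"
    proof -
      have "Re (of_real (p i + p j) * cnj (A j i) * A j i) = (p i + p j) * (cmod (A i j))^2" for i j
      proof -
        have "cnj (A j i) * A j i = of_real ((cmod (A j i))^2)"
          using complex_norm_square[of "A j i"] by (simp add: mult.commute)
        moreover have "cmod (A j i) = cmod (A i j)" by (simp add: Ah[of j i])
        ultimately show ?thesis by (simp add: mult.assoc)
      qed
      then show ?thesis by (simp add: Re_sum case_prod_beta)
    qed
    ultimately show ?thesis by (simp add: g_split sum.distrib)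
  qed
  have "(\<Sum>i\<in>UNIV. \<Sum>j\<in>UNIV. (p i + p j) / 2 * n i j) \<le> (\<Sum>i\<in>UNIV. \<Sum>j\<in>UNIV. g i j)"
    by (intro sum_mono T)
  then show ?thesis using S1 S2 R by simp
qed


lemma sum3_swap: "(\<Sum>k\<in>K. \<Sum>l\<in>L. \<Sum>x\<in>S. f k l x) = (\<Sum>x\<in>S. \<Sum>k\<in>K. \<Sum>l\<in>L. f k l x)"
proof -
  have "(\<Sum>k\<in>K. \<Sum>l\<in>L. \<Sum>x\<in>S. f k l x) = (\<Sum>k\<in>K. \<Sum>x\<in>S. \<Sum>l\<in>L. f k l x)"
    by (intro sum.cong refl sum.swap)
  also have "\<dots> = (\<Sum>x\<in>S. \<Sum>k\<in>K. \<Sum>l\<in>L. f k l x)" by (rule sum.swap)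
  finally show ?thesis .
qed

lemma quad_real:
  fixes v c :: "_ \<Rightarrow> real" and X :: "_ \<Rightarrow> _ \<Rightarrow> real"
  shows "(\<Sum>k\<in>K. \<Sum>l\<in>K. v k * v l * (\<Sum>x\<in>S. c x * X k x * X l x)) = (\<Sum>x\<in>S. c x * (\<Sum>k\<in>K. v k * X k x)^2)"
proof -
  have "(\<Sum>k\<in>K. \<Sum>l\<in>K. v k * v l * (\<Sum>x\<in>S. c x * X k x * X l x))
     = (\<Sum>k\<in>K. \<Sum>l\<in>K. \<Sum>x\<in>S. c x * ((v k * X k x) * (v l * X l x)))"
    by (simp add: sum_distrib_left algebra_simps)
  also have "\<dots> = (\<Sum>x\<in>S. \<Sum>k\<in>K. \<Sum>l\<in>K. c x * ((v k * X k x) * (v l * X l x)))" by (rule sum3_swap)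
  also have "\<dots> = (\<Sum>x\<in>S. c x * (\<Sum>k\<in>K. v k * X k x)^2)"
    by (simp add: power2_eq_square sum_distrib_left sum_distrib_right mult.assoc) (rule sum.cong[OF refl], rule sum.swap)
  finally show ?thesis .
qed

lemma quad_cplx:
  fixes v :: "_ \<Rightarrow> real" and g :: "_ \<Rightarrow> complex"
  shows "(\<Sum>k\<in>K. \<Sum>l\<in>K. v k * v l * Re (\<Sum>x\<in>S. g x * X k x * Y l x))
    = Re (\<Sum>x\<in>S. g x * (\<Sum>k\<in>K. of_real (v k) * X k x) * (\<Sum>l\<in>K. of_real (v l) * Y l x))"
proof -
  have "(\<Sum>k\<in>K. \<Sum>l\<in>K. v k * v l * Re (\<Sum>x\<in>S. g x * X k x * Y l x))
     = Re (\<Sum>k\<in>K. \<Sum>l\<in>K. \<Sum>x\<in>S. g x * ((of_real (v k) * X k x) * (of_real (v l) * Y l x)))"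
  proof -
    have "v k * v l * Re (\<Sum>x\<in>S. g x * X k x * Y l x) = Re (\<Sum>x\<in>S. g x * ((of_real (v k) * X k x) * (of_real (v l) * Y l x)))" for k l
    proof -
      have "(\<Sum>x\<in>S. g x * ((of_real (v k) * X k x) * (of_real (v l) * Y l x))) = of_real (v k * v l) * (\<Sum>x\<in>S. g x * X k x * Y l x)"
        by (simp add: sum_distrib_left algebra_simps)
      then show ?thesis by simp
    qed
    then show ?thesis by (simp add: Re_sum)
  qed
  also have "\<dots> = Re (\<Sum>x\<in>S. \<Sum>k\<in>K. \<Sum>l\<in>K. g x * ((of_real (v k) * X k x) * (of_real (v l) * Y l x)))"
    by (rule arg_cong[where f=Re], rule sum3_swap)
  also have "\<dots> = Re (\<Sum>x\<in>S. g x * (\<Sum>k\<in>K. of_real (v k) * X k x) * (\<Sum>l\<in>K. of_real (v l) * Y l x))"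
    by (rule arg_cong[where f=Re], intro sum.cong refl) (simp add: sum_distrib_left sum_distrib_right mult.assoc, rule sum.swap)
  finally show ?thesis .
qed

lemma quad_cplx2:
  fixes v :: "_ \<Rightarrow> real" and g :: "_ \<Rightarrow> complex"
  shows "(\<Sum>k\<in>K. \<Sum>l\<in>K. v k * v l * Re (\<Sum>i\<in>I. \<Sum>j\<in>J. g i * (X k i j * Y l j i)))
    = Re (\<Sum>i\<in>I. \<Sum>j\<in>J. g i * ((\<Sum>k\<in>K. of_real (v k) * X k i j) * (\<Sum>l\<in>K. of_real (v l) * Y l j i)))"
proof -
  have e: "(\<Sum>i\<in>I. \<Sum>j\<in>J. F i j) = (\<Sum>x\<in>I \<times> J. F (fst x) (snd x))" for F :: "_ \<Rightarrow> _ \<Rightarrow> complex"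
    by (simp add: sum.cartesian_product split_def)
  show ?thesis
    unfolding e using quad_cplx[of v "\<lambda>x. g (fst x)" "\<lambda>k x. X k (fst x) (snd x)" "\<lambda>l x. Y l (snd x) (fst x)" "I \<times> J" K]
    by (simp add: mult.assoc)
qed

lemma quad_form:
  fixes M :: "real^'p^'p"
  shows "v \<bullet> (M *v v) = (\<Sum>k\<in>UNIV. \<Sum>l\<in>UNIV. v $ k * v $ l * M $ k $ l)"
  by (simp add: inner_vec_def matrix_vector_mult_def sum_distrib_left algebra_simps)


lemma line_hvd:
  assumes "smooth_on S f" "\<theta> \<in> S"
  shows "((\<lambda>t. f (\<theta> + t *\<^sub>R axis k 1)) has_vector_derivative partial k f \<theta>) (at 0)"
proof -
  have "(\<lambda>t. iter_partial [] f (\<theta> + t *\<^sub>R axis k 1)) differentiable (at 0)"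
    using assms unfolding smooth_on_def by blast
  then show ?thesis unfolding partial_def by (simp add: vector_derivative_works)
qed

lemma deriv_const:
  assumes "(g has_vector_derivative D) (at 0)" "open T" "(0::real) \<in> T" "\<And>t. t \<in> T \<Longrightarrow> g t = c"
  shows "D = 0"
proof -
  have "((\<lambda>t. c) has_vector_derivative D) (at 0)"
    by (rule has_vector_derivative_transform_within_open[OF assms(1,2,3)]) (use assms(4) in simp)
  moreover have "((\<lambda>t. c) has_vector_derivative 0) (at 0)" by (rule has_vector_derivative_const)
  ultimately show ?thesis by (rule vector_derivative_unique_at)
qed

lemma open_line:
  assumes "open S"
  shows "open {t::real. \<theta> + t *\<^sub>R (e::'a::real_normed_vector) \<in> S}"
proof -
  have "open ((\<lambda>t::real. \<theta> + t *\<^sub>R e) -` S)"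
    by (rule continuous_open_vimage[OF assms]) (intro continuous_intros)
  then show ?thesis by (simp add: vimage_def)
qed



lemma if10_r: "x * (if P then 1 else 0) = (if P then x else (0::complex))" by simp
lemma if0_mult: "(if P then x else 0) * y = (if P then x * y else (0::complex))" by simp
lemma if10_l: "(if P then 1 else 0) * x = (if P then x else (0::complex))" by simp

theorem lemma6:
  fixes \<Theta> :: "(real^'p) set"
    and p :: "'d::{finite,linorder} \<Rightarrow> real^'p \<Rightarrow> real"
    and w :: "'d::{finite,linorder} \<Rightarrow> real^'p \<Rightarrow> complex^'d::{finite,linorder}"
    and lam :: "'p \<Rightarrow> complex^'d::{finite,linorder}^'d::{finite,linorder}"
    and \<theta> v :: "real^'p"
  assumes "open \<Theta>"
    and "\<And>k. smooth_on \<Theta> (p k)"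
    and "\<And>k \<theta>. \<theta> \<in> \<Theta> \<Longrightarrow> 0 \<le> p k \<theta> \<and> p k \<theta> \<le> 1"
    and "\<And>\<theta>. \<theta> \<in> \<Theta> \<Longrightarrow> (\<Sum>k\<in>UNIV. p k \<theta>) = 1"
    and "\<And>k. smooth_on \<Theta> (w k)"
    and "\<And>i j \<theta>. \<theta> \<in> \<Theta> \<Longrightarrow> cinner (w i \<theta>) (w j \<theta>) = (if i = j then 1 else 0)"
    and "\<theta> \<in> \<Theta>"
    and "\<And>k. hermitian (lam k)"
    and "\<And>k. partial k (rho p w) \<theta> = (1/2) *\<^sub>R (rho p w \<theta> ** lam k + lam k ** rho p w \<theta>)"
  shows "v \<bullet> (H_SLD p w lam \<theta> *v v) \<le> v \<bullet> (C_L p w \<theta> *v v)"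
proof -
  define W where "W m = w m \<theta>" for m
  define q where "q m = p m \<theta>" for m
  define dp where "dp k m = partial k (p m) \<theta>" for k m
  define dw where "dw k m = partial k (w m) \<theta>" for k m
  define Lk where "Lk k i j = cinner (W i) (lam k *v W j)" for k i j
  define a where "a k i j = cinner (W i) (dw k j)" for k i j
  have ON: "\<And>i j. cinner (W i) (W j) = (if i = j then 1 else 0)" using assms(6)[OF assms(7)] by (simp add: W_def)
  have rhoeq: "\<And>\<theta>'. rho p w \<theta>' = rr (\<lambda>m. p m \<theta>') (\<lambda>m. w m \<theta>')" by (simp add: rho_def rr_def)
  have rho0: "rho p w \<theta> = rr q W" by (simp add: rhoeq q_def[abs_def] W_def[abs_def])
  have hp: "((\<lambda>t. p m (\<theta> + t *\<^sub>R axis k 1)) has_vector_derivative dp k m) (at 0)" for k m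
    unfolding dp_def by (rule line_hvd[OF assms(2) assms(7)])
  have hw: "((\<lambda>t. w m (\<theta> + t *\<^sub>R axis k 1)) has_vector_derivative dw k m) (at 0)" for k m
    unfolding dw_def by (rule line_hvd[OF assms(5) assms(7)])
  define F where "F k = ((\<chi> a b. \<Sum>m\<in>UNIV. of_real (dp k m) * W m $ a * cnj (W m $ b))
    + (\<chi> a b. \<Sum>m\<in>UNIV. of_real (q m) * dw k m $ a * cnj (W m $ b))
    + (\<chi> a b. \<Sum>m\<in>UNIV. of_real (q m) * W m $ a * cnj (dw k m $ b)))" for k
  have hrho: "partial k (rho p w) \<theta> = F k" for k
  proof -
    have "((\<lambda>t. rr (\<lambda>m. p m (\<theta> + t *\<^sub>R axis k 1)) (\<lambda>m. w m (\<theta> + t *\<^sub>R axis k 1))) has_vector_derivative F k) (at 0)"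
      using rho_deriv[of "\<lambda>m t. p m (\<theta> + t *\<^sub>R axis k 1)" "dp k" "\<lambda>m t. w m (\<theta> + t *\<^sub>R axis k 1)" "dw k", OF hp hw]
      by (simp add: F_def q_def W_def)
    then show ?thesis unfolding partial_def rhoeq by (rule vector_derivative_at)
  qed
  have E1: "cinner (W i) (F k *v W j) = (if i = j then of_real (dp k i) else 0) + of_real (q j) * a k i j
      + of_real (q i) * cinner (dw k i) (W j)" for k i j
    unfolding F_def mv_add cinner_add_r outer_sw by (simp add: ON a_def if10_r if10_l if0_mult)
  have E2: "a k i j + cinner (dw k i) (W j) = 0" for k i j
  proof -
    have "((\<lambda>t. cinner (w i (\<theta> + t *\<^sub>R axis k 1)) (w j (\<theta> + t *\<^sub>R axis k 1))) has_vector_derivative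
        (cinner (W i) (dw k j) + cinner (dw k i) (W j))) (at 0)"
      using cinner_hvd[OF hw[of i k] hw[of j k]] by (simp add: W_def)
    then show ?thesis unfolding a_def
      by (rule deriv_const[OF _ open_line[OF assms(1)]]) (use assms(6,7) in auto)
  qed
  have E3: "cinner (W i) (F k *v W j) = of_real ((q i + q j) / 2) * Lk k i j" for k i j
    using sld_entry[OF ON, of i q "lam k" j] assms(9)[of k] hrho[of k] unfolding rho0 Lk_def by simp
  have relk: "of_real ((q i + q j) / 2) * Lk k i j = (if i = j then of_real (dp k i) else 0) + of_real (q j - q i) * a k i j" for k i j
  proof -
    have "cinner (dw k i) (W j) = - a k i j" using E2[of k i j] by (simp add: eq_neg_iff_add_eq_0 add.commute)
    then show ?thesis using E1[of i k j] E3[of i k j] by (simp add: algebra_simps)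
  qed
  define L where "L i j = (\<Sum>k\<in>UNIV. of_real (v $ k) * Lk k i j)" for i j
  define A where "A i j = (\<Sum>k\<in>UNIV. of_real (v $ k) * a k i j)" for i j
  define Dp where "Dp i = (\<Sum>k\<in>UNIV. v $ k * dp k i)" for i
  have rel: "of_real ((q i + q j) / 2) * L i j = (if i = j then of_real (Dp i) else 0) + of_real (q j - q i) * A i j" for i j
  proof -
    have "of_real ((q i + q j) / 2) * L i j = (\<Sum>k\<in>UNIV. of_real (v $ k) * (of_real ((q i + q j) / 2) * Lk k i j))"
      by (simp add: L_def sum_distrib_left mult.left_commute)
    also have "\<dots> = (\<Sum>k\<in>UNIV. of_real (v $ k) * ((if i = j then of_real (dp k i) else 0) + of_real (q j - q i) * a k i j))"
      by (simp only: relk)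
    also have "\<dots> = (if i = j then of_real (Dp i) else 0) + of_real (q j - q i) * A i j"
      by (simp add: Dp_def A_def sum.distrib sum_distrib_left algebra_simps)
    finally show ?thesis .
  qed
  have Lh: "L j i = cnj (L i j)" for i j
  proof -
    have "Lk k j i = cnj (Lk k i j)" for k
      unfolding Lk_def using cinner_swap[where b="W j" and a="lam k *v W i"]
        cinner_herm[OF assms(8), where u="W i" and z="W j"] by simp
    then show ?thesis by (simp add: L_def)
  qed
  have Ah: "A i j = - cnj (A j i)" for i j
  proof -
    have "a k i j = - cnj (a k j i)" for k
      using E2[of k i j] unfolding a_def cinner_swap[of "dw k i"] by (simp add: eq_neg_iff_add_eq_0)
    then show ?thesis by (simp add: A_def sum_negf)
  qed
  have pos: "q i \<ge> 0" for i using assms(3)[OF assms(7)] by (simp add: q_def)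
  have main: "Re (\<Sum>i\<in>UNIV. \<Sum>j\<in>UNIV. of_real (q i) * (L i j * L j i))
     \<le> (\<Sum>i\<in>{i. q i \<noteq> 0}. Dp i ^ 2 / q i) + 4 * Re (\<Sum>(i,j)\<in>{(i,j). i < j}. of_real (q i + q j) * cnj (A j i) * A j i)"
    by (rule alg[OF pos Lh Ah rel])
  have lhs: "v \<bullet> (H_SLD p w lam \<theta> *v v) = Re (\<Sum>i\<in>UNIV. \<Sum>j\<in>UNIV. of_real (q i) * (L i j * L j i))"
  proof -
    have "v \<bullet> (H_SLD p w lam \<theta> *v v) = (\<Sum>k\<in>UNIV. \<Sum>l\<in>UNIV. v $ k * v $ l *
        Re (\<Sum>i\<in>UNIV. \<Sum>j\<in>UNIV. of_real (q i) * (Lk k i j * Lk l j i)))"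
      unfolding quad_form H_SLD_def rho0 trace_rr2[OF ON] Lk_def by simp
    also have "\<dots> = Re (\<Sum>i\<in>UNIV. \<Sum>j\<in>UNIV. of_real (q i) * (L i j * L j i))"
      unfolding quad_cplx2 L_def ..
    finally show ?thesis .
  qed
  have rhs: "v \<bullet> (C_L p w \<theta> *v v) = (\<Sum>i\<in>{i. q i \<noteq> 0}. Dp i ^ 2 / q i) + 4 * Re (\<Sum>(i,j)\<in>{(i,j). i < j}. of_real (q i + q j) * cnj (A j i) * A j i)"
  proof -
    define S :: "('d \<times> 'd) set" where "S = {(i,j). i < j}"
    have c1: "(\<Sum>k\<in>UNIV. \<Sum>l\<in>UNIV. v $ k * v $ l * (\<Sum>i\<in>{i. q i \<noteq> 0}. 1 / q i * dp k i * dp l i))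
        = (\<Sum>i\<in>{i. q i \<noteq> 0}. Dp i ^ 2 / q i)"
      unfolding quad_real Dp_def by simp
    have c2: "(\<Sum>k\<in>UNIV. \<Sum>l\<in>UNIV. v $ k * v $ l * Re (\<Sum>x\<in>S. of_real (q (fst x) + q (snd x)) * cinner (dw k (fst x)) (W (snd x)) * cinner (W (snd x)) (dw l (fst x))))
        = Re (\<Sum>x\<in>S. of_real (q (fst x) + q (snd x)) * cnj (A (snd x) (fst x)) * A (snd x) (fst x))"
    proof -
      have "cnj (A j i) = (\<Sum>k\<in>UNIV. of_real (v $ k) * cinner (dw k i) (W j))" for i j
        by (simp add: A_def a_def cinner_swap[of "dw _ i"])
      moreover have "A j i = (\<Sum>k\<in>UNIV. of_real (v $ k) * cinner (W j) (dw k i))" for i j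
        by (simp add: A_def a_def)
      ultimately show ?thesis unfolding quad_cplx by simp
    qed
    have "v \<bullet> (C_L p w \<theta> *v v) = (\<Sum>k\<in>UNIV. \<Sum>l\<in>UNIV. v $ k * v $ l * (\<Sum>i\<in>{i. q i \<noteq> 0}. 1 / q i * dp k i * dp l i))
      + 4 * (\<Sum>k\<in>UNIV. \<Sum>l\<in>UNIV. v $ k * v $ l * Re (\<Sum>x\<in>S. of_real (q (fst x) + q (snd x)) * cinner (dw k (fst x)) (W (snd x)) * cinner (W (snd x)) (dw l (fst x))))"
      unfolding quad_form C_L_def
      by (simp add: S_def q_def dp_def dw_def W_def case_prod_unfold sum.distrib sum_distrib_left algebra_simps)
    also have "\<dots> = (\<Sum>i\<in>{i. q i \<noteq> 0}. Dp i ^ 2 / q i) + 4 * Re (\<Sum>(i,j)\<in>{(i,j). i < j}. of_real (q i + q j) * cnj (A j i) * A j i)"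
      unfolding c1 c2 by (simp add: S_def case_prod_unfold)
    finally show ?thesis .
  qed
  show ?thesis using main lhs rhs by simp
qed
end
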